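(* Let $r,c\in\mathbb{N}$, $n=r+c$, $N=2^n$, and $X=(X_1,X_2)$ with $X_1\subset\{0,1\}^n$ the strings ending in $0^c$ and $X_2\subset\{0,1\}^n$ the strings beginning with $0^r$. Consider two distributions on pairs $(\varphi,y)\in S_N\times\{0,1\}^r$: $\mathcal D_1$: sample $\varphi\sim S_N$ uniformly, sample $x\sim\{0,1\}^r$ uniformly, let $y=\mathsf{Sp}^{\varphi}(x)$, output $(\varphi,y)$. $\mathcal D_2$: sample $y\sim\{0,1\}^r$ uniformly, sample $\pi\sim\mathcal D_X$, output $(\varphi,y)$ with $\varphi=\mathsf{XOR}_{y\|0^c}\circ\pi$. Then $\mathcal D_1$ and $\mathcal D_2$ are identical distributions.
   Context: Permutations of $\{0,1\}^n$ are identified with $S_N$. $\mathsf{Sp}^{\varphi}(x)$ is the first $r$ bits of $\varphi(x\|0^c)$. $\mathsf{XOR}_{y\|0^c}$ is the permutation of $\{0,1\}^n$ given by $(a\|b)\mapsto (a\oplus y)\|b$ for $a\in\{0,1\}^r$, $b\in\{0,1\}^c$. For $\pi\in S_N$, $X_\pi=\{(i,j): i\in X_1,\ j\in X_2,\ \pi(i)=j\}$; the distribution $\mathcal D_X$ on $S_N$ is $\Pr_{\Pi\sim\mathcal D_X}[\Pi=\pi]=|X_\pi|/\sum_{\sigma\in S_N}|X_\sigma|$. *)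

theory Defs
  imports "HOL-Probability.Probability" "HOL-Combinatorics.Permutations"
begin

definition bits :: "nat \<Rightarrow> bool list set" where
  "bits m = {s. length s = m}"

definition SN :: "nat \<Rightarrow> (bool list \<Rightarrow> bool list) set" where
  "SN n = {\<phi>. \<phi> permutes bits n}"

definition X1 :: "nat \<Rightarrow> nat \<Rightarrow> bool list set" where
  "X1 r c = {s \<in> bits (r + c). drop r s = replicate c False}"

definition X2 :: "nat \<Rightarrow> nat \<Rightarrow> bool list set" where
  "X2 r c = {s \<in> bits (r + c). take r s = replicate r False}"

definition Xpi :: "nat \<Rightarrow> nat \<Rightarrow> (bool list \<Rightarrow> bool list) \<Rightarrow> (bool list \<times> bool list) set" where
  "Xpi r c \<pi> = {(i, j). i \<in> X1 r c \<and> j \<in> X2 r c \<and> \<pi> i = j}"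

definition DX :: "nat \<Rightarrow> nat \<Rightarrow> (bool list \<Rightarrow> bool list) pmf" where
  "DX r c = embed_pmf (\<lambda>\<pi>. if \<pi> \<in> SN (r + c)
      then real (card (Xpi r c \<pi>)) / (\<Sum>\<sigma>\<in>SN (r + c). real (card (Xpi r c \<sigma>)))
      else 0)"

definition Sp :: "nat \<Rightarrow> nat \<Rightarrow> (bool list \<Rightarrow> bool list) \<Rightarrow> bool list \<Rightarrow> bool list" where
  "Sp r c \<phi> x = take r (\<phi> (x @ replicate c False))"

definition XORy :: "nat \<Rightarrow> nat \<Rightarrow> bool list \<Rightarrow> bool list \<Rightarrow> bool list" where
  "XORy r c y s = (if s \<in> bits (r + c)
      then map2 (\<lambda>a b. a \<noteq> b) (take r s) y @ drop r s else s)"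

definition D1 :: "nat \<Rightarrow> nat \<Rightarrow> ((bool list \<Rightarrow> bool list) \<times> bool list) pmf" where
  "D1 r c = do {
     \<phi> \<leftarrow> pmf_of_set (SN (r + c));
     x \<leftarrow> pmf_of_set (bits r);
     return_pmf (\<phi>, Sp r c \<phi> x) }"

definition D2 :: "nat \<Rightarrow> nat \<Rightarrow> ((bool list \<Rightarrow> bool list) \<times> bool list) pmf" where
  "D2 r c = do {
     y \<leftarrow> pmf_of_set (bits r);
     \<pi> \<leftarrow> DX r c;
     return_pmf (XORy r c y \<circ> \<pi>, y) }"

end

theory Submission
  imports Defs
begin

lemma finite_bits: "finite (bits m)"
proof -
  have "bits m = {xs. set xs \<subseteq> (UNIV::bool set) \<and> length xs = m}" by (auto simp: bits_def)
  thus ?thesis using finite_lists_length_eq[of "UNIV::bool set" m] by simp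
qed

lemma bits_ne: "bits m \<noteq> {}"
  using length_replicate[of m False] unfolding bits_def by blast

lemma finite_SN: "finite (SN n)"
  unfolding SN_def using finite_permutations[OF finite_bits] by simp

lemma id_SN: "id \<in> SN n" unfolding SN_def by (simp add: permutes_id)

lemma SN_ne: "SN n \<noteq> {}" using id_SN by blast

lemma map2_xor_xor: "length a = length y \<Longrightarrow> map2 (\<lambda>a b. a \<noteq> b) (map2 (\<lambda>a b. a \<noteq> b) a y) y = a"
  by (induction a y rule: list_induct2) auto

lemma map2_xor_zero: "length a = length y \<Longrightarrow> (map2 (\<lambda>a b. a \<noteq> b) a y = replicate (length a) False) = (a = y)"
  by (induction a y rule: list_induct2) auto

lemma XORy_bits: "length y = r \<Longrightarrow> s \<in> bits (r+c) \<Longrightarrow> XORy r c y s \<in> bits (r+c)"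
  by (auto simp: XORy_def bits_def)

lemma XORy_invol: "length y = r \<Longrightarrow> XORy r c y (XORy r c y s) = s"
proof (cases "s \<in> bits (r+c)")
  case True
  assume y: "length y = r"
  hence "XORy r c y s \<in> bits (r+c)" using XORy_bits True by blast
  moreover have "length (take r s) = length y" using True y by (auto simp: bits_def)
  ultimately show ?thesis using True y map2_xor_xor[OF \<open>length (take r s) = length y\<close>]
    by (simp add: XORy_def)
next
  case False thus ?thesis by (simp add: XORy_def)
qed

lemma XORy_permutes: assumes "length y = r" shows "XORy r c y permutes bits (r+c)"
proof (rule bij_imp_permutes)
  show "bij_betw (XORy r c y) (bits (r + c)) (bits (r + c))"
    by (rule bij_betwI[where g="XORy r c y"]) (auto simp: XORy_bits XORy_invol assms)
qed (simp add: XORy_def)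

lemma XORy_comp_SN: "length y = r \<Longrightarrow> (XORy r c y \<circ> \<phi> \<in> SN (r+c)) = (\<phi> \<in> SN (r+c))"
proof
  assume y: "length y = r"
  { assume "\<phi> \<in> SN (r+c)" thus "XORy r c y \<circ> \<phi> \<in> SN (r+c)"
      unfolding SN_def using permutes_compose[OF _ XORy_permutes[OF y]] by blast }
  assume "XORy r c y \<circ> \<phi> \<in> SN (r+c)"
  hence "XORy r c y \<circ> (XORy r c y \<circ> \<phi>) \<in> SN (r+c)"
    unfolding SN_def using permutes_compose[OF _ XORy_permutes[OF y]] by blast
  moreover have "XORy r c y \<circ> (XORy r c y \<circ> \<phi>) = \<phi>" by (auto simp: XORy_invol y)
  ultimately show "\<phi> \<in> SN (r+c)" by simp
qed


lemma X1_char: "(i \<in> X1 r c) = (\<exists>x\<in>bits r. i = x @ replicate c False)"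
proof
  assume "i \<in> X1 r c"
  hence "take r i \<in> bits r" "i = take r i @ replicate c False"
    unfolding X1_def bits_def by (auto, metis append_take_drop_id)
  thus "\<exists>x\<in>bits r. i = x @ replicate c False" by blast
qed (auto simp: X1_def bits_def)

lemma X2_XORy:
  assumes y: "y \<in> bits r" and z: "z \<in> bits (r+c)"
  shows "(XORy r c y z \<in> X2 r c) = (take r z = y)"
proof -
  have l: "length (take r z) = length y" using y z by (auto simp: bits_def)
  have "XORy r c y z \<in> bits (r+c)" using XORy_bits y z by (auto simp: bits_def)
  moreover have "take r (XORy r c y z) = map2 (\<lambda>a b. a \<noteq> b) (take r z) y"
    using y z by (auto simp: XORy_def bits_def)
  ultimately have "(XORy r c y z \<in> X2 r c) = (map2 (\<lambda>a b. a \<noteq> b) (take r z) y = replicate (length (take r z)) False)"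
    using y z by (auto simp: X2_def bits_def)
  thus ?thesis using map2_xor_zero[OF l] by simp
qed

lemma card_Xpi:
  assumes phi: "\<phi> \<in> SN (r+c)" and y: "y \<in> bits r"
  shows "card (Xpi r c (XORy r c y \<circ> \<phi>)) = card {x\<in>bits r. Sp r c \<phi> x = y}"
proof -
  let ?\<pi> = "XORy r c y \<circ> \<phi>"
  have "Xpi r c ?\<pi> = (\<lambda>i. (i, ?\<pi> i)) ` {i\<in>X1 r c. ?\<pi> i \<in> X2 r c}"
    unfolding Xpi_def by auto
  hence 1: "card (Xpi r c ?\<pi>) = card {i\<in>X1 r c. ?\<pi> i \<in> X2 r c}"
    by (simp add: card_image inj_on_def)
  have "{i\<in>X1 r c. ?\<pi> i \<in> X2 r c} = (\<lambda>x. x @ replicate c False) ` {x\<in>bits r. Sp r c \<phi> x = y}"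
  proof -
    have "?\<pi> (x @ replicate c False) \<in> X2 r c \<longleftrightarrow> Sp r c \<phi> x = y" if x: "x \<in> bits r" for x
    proof -
      have "x @ replicate c False \<in> bits (r+c)" using x by (auto simp: bits_def)
      hence "\<phi> (x @ replicate c False) \<in> bits (r+c)"
        using phi unfolding SN_def by (simp add: permutes_in_image)
      thus ?thesis using X2_XORy[OF y] by (simp add: Sp_def)
    qed
    thus ?thesis using X1_char[of _ r c] by auto
  qed
  moreover have "inj (\<lambda>x::bool list. x @ replicate c False)" by (simp add: inj_on_def)
  ultimately show ?thesis using 1 by (simp add: card_image inj_on_subset)
qed


lemma sum_ret: "finite A \<Longrightarrow> (\<Sum>x\<in>A. indicat_real {(\<phi>, y)} (\<psi>, f x)) = (if \<psi> = \<phi> then real (card {x\<in>A. f x = y}) else 0)"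
  by (auto simp: indicator_def intro!: arg_cong[where f=card])

lemma pmf_D1: "pmf (D1 r c) (\<phi>, y) =
   (if \<phi> \<in> SN (r+c) then real (card {x\<in>bits r. Sp r c \<phi> x = y}) / real (card (bits r)) else 0) / real (card (SN (r+c)))" (is "_ = ?R")
proof -
  have "pmf (D1 r c) (\<phi>, y) = (\<Sum>\<psi>\<in>SN (r+c). \<Sum>x\<in>bits r. indicat_real {(\<phi>, y)} (\<psi>, Sp r c \<psi> x)) /
     (real (card (SN (r + c))) * real (card (bits r)))"
    unfolding D1_def
    by (simp add: pmf_bind integral_pmf_of_set finite_bits bits_ne finite_SN SN_ne pmf_return)
  also have "\<dots> = (\<Sum>\<psi>\<in>SN (r+c). (if \<psi> = \<phi> then real (card {x\<in>bits r. Sp r c \<psi> x = y}) else 0)) /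
     (real (card (SN (r + c))) * real (card (bits r)))"
    by (simp add: sum_ret[OF finite_bits])
  also have "\<dots> = ?R"
    by (simp add: finite_SN)
  finally show ?thesis .
qed


lemma finite_Xpi: "finite (Xpi r c \<pi>)"
proof -
  have "Xpi r c \<pi> \<subseteq> bits (r+c) \<times> bits (r+c)" by (auto simp: Xpi_def X1_def X2_def)
  thus ?thesis using finite_bits by (meson finite_SigmaI finite_subset)
qed

lemma S_pos: "0 < (\<Sum>\<sigma>\<in>SN (r + c). real (card (Xpi r c \<sigma>)))"
proof (rule sum_pos2[OF finite_SN id_SN])
  have "(replicate (r+c) False, replicate (r+c) False) \<in> Xpi r c id"
    by (auto simp: Xpi_def X1_def X2_def bits_def)
  thus "0 < real (card (Xpi r c id))" using finite_Xpi card_gt_0_iff by fastforce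
qed auto

lemma pmf_DX: "pmf (DX r c) \<pi> = (if \<pi> \<in> SN (r + c)
      then real (card (Xpi r c \<pi>)) / (\<Sum>\<sigma>\<in>SN (r + c). real (card (Xpi r c \<sigma>)))
      else 0)"
  unfolding DX_def
proof (rule pmf_embed_pmf)
  let ?S = "(\<Sum>\<sigma>\<in>SN (r + c). real (card (Xpi r c \<sigma>)))"
  show "0 \<le> (if x \<in> SN (r + c) then real (card (Xpi r c x)) / ?S else 0)" for x
    using S_pos[of r c] by auto
  have "(\<integral>\<^sup>+ x. ennreal (if x \<in> SN (r + c) then real (card (Xpi r c x)) / ?S else 0) \<partial>count_space UNIV)
     = (\<Sum>x\<in>SN (r+c). ennreal (if x \<in> SN (r + c) then real (card (Xpi r c x)) / ?S else 0))"
    by (rule nn_integral_count_space'[OF finite_SN]) auto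
  also have "\<dots> = ennreal (\<Sum>x\<in>SN (r+c). real (card (Xpi r c x)) / ?S)"
    using S_pos[of r c] by (subst sum_ennreal) auto
  also have "\<dots> = 1" using S_pos[of r c] by (simp add: sum_divide_distrib[symmetric])
  finally show "(\<integral>\<^sup>+ x. ennreal (if x \<in> SN (r + c) then real (card (Xpi r c x)) / ?S else 0) \<partial>count_space UNIV) = 1" .
qed

lemma pmf_D2: "pmf (D2 r c) (\<phi>, y) =
   (if y \<in> bits r then pmf (DX r c) (XORy r c y \<circ> \<phi>) else 0) / real (card (bits r))"
proof -
  have "D2 r c = pmf_of_set (bits r) \<bind> (\<lambda>y. map_pmf (\<lambda>\<pi>. (XORy r c y \<circ> \<pi>, y)) (DX r c))"
    unfolding D2_def map_pmf_def by simp
  hence "pmf (D2 r c) (\<phi>, y) = (\<Sum>y'\<in>bits r. pmf (map_pmf (\<lambda>\<pi>. (XORy r c y' \<circ> \<pi>, y')) (DX r c)) (\<phi>, y)) / real (card (bits r))"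
    by (simp add: pmf_bind integral_pmf_of_set finite_bits bits_ne)
  also have "(\<Sum>y'\<in>bits r. pmf (map_pmf (\<lambda>\<pi>. (XORy r c y' \<circ> \<pi>, y')) (DX r c)) (\<phi>, y)) =
     (\<Sum>y'\<in>bits r. if y' = y then pmf (DX r c) (XORy r c y \<circ> \<phi>) else 0)"
  proof (rule sum.cong[OF refl])
    fix y' assume y': "y' \<in> bits r"
    show "pmf (map_pmf (\<lambda>\<pi>. (XORy r c y' \<circ> \<pi>, y')) (DX r c)) (\<phi>, y) = (if y' = y then pmf (DX r c) (XORy r c y \<circ> \<phi>) else 0)"
    proof (cases "y' = y")
      case True
      have l: "length y = r" using y' True by (simp add: bits_def)
      have inj: "inj (\<lambda>\<pi>. (XORy r c y \<circ> \<pi>, y))"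
      proof (rule injI)
        fix a b assume "(XORy r c y \<circ> a, y) = (XORy r c y \<circ> b, y)"
        hence "XORy r c y \<circ> (XORy r c y \<circ> a) = XORy r c y \<circ> (XORy r c y \<circ> b)" by simp
        thus "a = b" by (simp add: fun_eq_iff XORy_invol l)
      qed
      have "(\<phi>, y) = (XORy r c y \<circ> (XORy r c y \<circ> \<phi>), y)" by (simp add: fun_eq_iff XORy_invol l)
      hence "pmf (map_pmf (\<lambda>\<pi>. (XORy r c y \<circ> \<pi>, y)) (DX r c)) (\<phi>, y)
         = pmf (map_pmf (\<lambda>\<pi>. (XORy r c y \<circ> \<pi>, y)) (DX r c)) ((\<lambda>\<pi>. (XORy r c y \<circ> \<pi>, y)) (XORy r c y \<circ> \<phi>))"
        by simp
      also have "\<dots> = pmf (DX r c) (XORy r c y \<circ> \<phi>)" by (rule pmf_map_inj'[OF inj])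
      finally show ?thesis using True by simp
    next
      case False thus ?thesis by (auto intro!: pmf_map_outside)
    qed
  qed
  also have "\<dots> = (if y \<in> bits r then pmf (DX r c) (XORy r c y \<circ> \<phi>) else 0)"
    by (simp add: finite_bits)
  finally show ?thesis .
qed


lemma Sp_bits: "\<phi> \<in> SN (r+c) \<Longrightarrow> x \<in> bits r \<Longrightarrow> Sp r c \<phi> x \<in> bits r"
proof -
  assume phi: "\<phi> \<in> SN (r+c)" and x: "x \<in> bits r"
  have "x @ replicate c False \<in> bits (r+c)" using x by (auto simp: bits_def)
  hence "\<phi> (x @ replicate c False) \<in> bits (r+c)"
    using phi unfolding SN_def by (simp add: permutes_in_image)
  thus ?thesis by (auto simp: Sp_def bits_def)
qed

theorem lemma5:
  fixes r c :: nat
  shows "D1 r c = D2 r c"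
proof -
  define S where "S = (\<Sum>\<sigma>\<in>SN (r + c). real (card (Xpi r c \<sigma>)))"
  define K where "K = real (card (SN (r+c))) / S"
  have Spos: "0 < S" unfolding S_def by (rule S_pos)
  have SNpos: "0 < real (card (SN (r+c)))" using finite_SN SN_ne card_gt_0_iff by auto
  have cnt0: "card {x\<in>bits r. Sp r c \<phi> x = y} = 0" if "\<phi> \<in> SN (r+c)" "y \<notin> bits r" for \<phi> y
    using Sp_bits[OF that(1)] that(2) by (auto simp: card_eq_0_iff)
  have key: "pmf (D2 r c) z = K * pmf (D1 r c) z" for z
  proof (cases z)
    case (Pair \<phi> y)
    show ?thesis
    proof (cases "y \<in> bits r")
      case True
      hence l: "length y = r" by (simp add: bits_def)
      show ?thesis using True SNpos Spos
        by (simp add: Pair pmf_D1 pmf_D2 pmf_DX XORy_comp_SN[OF l] card_Xpi K_def S_def[symmetric])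
    next
      case False
      thus ?thesis by (simp add: Pair pmf_D1 pmf_D2 cnt0)
    qed
  qed
  let ?A = "SN (r+c) \<times> bits r"
  have finA: "finite ?A" using finite_SN finite_bits by simp
  have s1: "set_pmf (D1 r c) \<subseteq> ?A"
  proof
    fix z assume "z \<in> set_pmf (D1 r c)"
    then obtain \<phi> y where z: "z = (\<phi>, y)" and nz: "pmf (D1 r c) (\<phi>, y) \<noteq> 0"
      by (cases z) (auto simp: set_pmf_iff)
    hence phi: "\<phi> \<in> SN (r+c)" by (auto simp: pmf_D1 split: if_splits)
    with nz have "card {x\<in>bits r. Sp r c \<phi> x = y} \<noteq> 0" by (auto simp: pmf_D1)
    hence "y \<in> bits r" using cnt0[OF phi, of y] by metis
    thus "z \<in> ?A" using z phi by simp
  qed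
  have s2: "set_pmf (D2 r c) \<subseteq> ?A"
  proof
    fix z assume "z \<in> set_pmf (D2 r c)"
    then obtain \<phi> y where z: "z = (\<phi>, y)" and nz: "pmf (D2 r c) (\<phi>, y) \<noteq> 0"
      by (cases z) (auto simp: set_pmf_iff)
    hence y: "y \<in> bits r" by (auto simp: pmf_D2 split: if_splits)
    hence l: "length y = r" by (simp add: bits_def)
    from nz y have "pmf (DX r c) (XORy r c y \<circ> \<phi>) \<noteq> 0" by (auto simp: pmf_D2)
    hence "XORy r c y \<circ> \<phi> \<in> SN (r+c)" by (auto simp: pmf_DX split: if_splits)
    hence "\<phi> \<in> SN (r+c)" using XORy_comp_SN[OF l] by simp
    thus "z \<in> ?A" using z y by simp
  qed
  have "1 = (\<Sum>z\<in>?A. pmf (D2 r c) z)" using sum_pmf_eq_1[OF finA s2] by simp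
  also have "\<dots> = K * (\<Sum>z\<in>?A. pmf (D1 r c) z)" by (simp add: key sum_distrib_left)
  also have "\<dots> = K" using sum_pmf_eq_1[OF finA s1] by simp
  finally have K1: "K = 1" by simp
  show ?thesis by (rule pmf_eqI) (simp add: key K1)
qed

end
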